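(* Let $0<k<n$ be integers with $n-2k+2\ge 0$. Then there exists a $k$-splitting of $Q_2^n$ that contains at most two $(n-k)$-faces of any fixed direction.
   Context: $Q_2^n=\{0,1\}^n$. For $0\le m\le n$, an $m$-face of $Q_2^n$ is given by a tuple $a=(a_1,\dots,a_n)\in\{0,1,*\}^n$ with exactly $m$ entries equal to $*$; it denotes the set $\{x\in Q_2^n : x_i=a_i \text{ whenever } a_i\in\{0,1\}\}$. The direction of a face is the set of positions of its asterisks. A $k$-splitting of $Q_2^n$ is a collection of exactly $2^k$ $(n-k)$-faces whose union is $Q_2^n$ (equivalently, a partition of $Q_2^n$ into $(n-k)$-faces). *)

theory Defs
  imports Main
begin

datatype sym = Zero | One | Star

text \<open>The cube Q_2^n: bool lists of length n (False = 0, True = 1).\<close>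
definition cube :: "nat \<Rightarrow> bool list set" where
  "cube n = {x. length x = n}"

definition sym_of_bool :: "bool \<Rightarrow> sym" where
  "sym_of_bool b = (if b then One else Zero)"

definition face_set :: "sym list \<Rightarrow> bool list set" where
  "face_set a = {x. length x = length a \<and>
     (\<forall>i < length a. a ! i \<noteq> Star \<longrightarrow> sym_of_bool (x ! i) = a ! i)}"

definition direction :: "sym list \<Rightarrow> nat set" where
  "direction a = {i. i < length a \<and> a ! i = Star}"

definition is_face :: "nat \<Rightarrow> nat \<Rightarrow> sym list \<Rightarrow> bool" where
  "is_face n m a \<longleftrightarrow> length a = n \<and> card (direction a) = m"

definition k_splitting :: "nat \<Rightarrow> nat \<Rightarrow> sym list set \<Rightarrow> bool" where
  "k_splitting n k F \<longleftrightarrow> finite F \<and> card F = 2 ^ k \<and>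
     (\<forall>a \<in> F. is_face n (n - k) a) \<and> (\<Union>a \<in> F. face_set a) = cube n"

end

theory Submission
  imports Defs
begin

definition good :: "nat \<Rightarrow> nat \<Rightarrow> sym list set \<Rightarrow> bool" where
  "good n k F \<longleftrightarrow> k_splitting n k F \<and> (\<forall>D. card {a \<in> F. direction a = D} \<le> 2)"

lemma face_set_iff:
  "x \<in> face_set a \<longleftrightarrow> list_all2 (\<lambda>b s. s \<noteq> Star \<longrightarrow> sym_of_bool b = s) x a"
  by (auto simp: face_set_def list_all2_conv_all_nth)

lemma direction_Nil [simp]: "direction [] = {}"
  by (simp add: direction_def)

lemma direction_Cons [simp]:
  "direction (s # xs) = (if s = Star then insert 0 (Suc ` direction xs) else Suc ` direction xs)"
  apply (rule set_eqI)
  subgoal for i by (cases i) (auto simp: direction_def)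
  done

lemma face_set_Cons [simp]:
  "b # y \<in> face_set (s # a) \<longleftrightarrow> (s \<noteq> Star \<longrightarrow> sym_of_bool b = s) \<and> y \<in> face_set a"
  by (simp add: face_set_iff)

lemma face_set_Nil_mem [simp]: "[] \<in> face_set a \<longleftrightarrow> a = []"
  by (simp add: face_set_iff)

lemma face_set_replicate [simp]: "y \<in> face_set (replicate m Star) \<longleftrightarrow> length y = m"
  by (auto simp: face_set_iff list_all2_conv_all_nth)

lemma face_set_length: "x \<in> face_set a \<Longrightarrow> length x = length a"
  by (simp add: face_set_def)

lemma direction_replicate [simp]: "direction (replicate m Star) = {0..<m}"
  by (auto simp: direction_def)

lemma finite_direction [simp]: "finite (direction a)"
  by (simp add: direction_def)

lemma sym_of_bool_inj [simp]: "sym_of_bool a = sym_of_bool b \<longleftrightarrow> a = b"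
  by (simp add: sym_of_bool_def)

lemma sym_of_bool_ne [simp]: "sym_of_bool b \<noteq> Star"
  by (simp add: sym_of_bool_def)

lemma base1:
  assumes "1 \<le> m"
  shows "\<exists>F. good m 1 F"
proof -
  define F where "F = {Zero # replicate (m-1) Star, One # replicate (m-1) Star}"
  have fin: "finite F" by (simp add: F_def)
  have c2: "card F = 2" by (simp add: F_def)
  have faces: "\<forall>a\<in>F. is_face m (m - 1) a"
    using assms by (auto simp: F_def is_face_def card_image)
  have un: "(\<Union>a \<in> F. face_set a) = cube m"
  proof
    show "(\<Union>a \<in> F. face_set a) \<subseteq> cube m"
      using assms by (auto simp: F_def face_set_def cube_def)
  next
    show "cube m \<subseteq> (\<Union>a \<in> F. face_set a)"
    proof
      fix x assume "x \<in> cube m"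
      then have "length x = m" by (simp add: cube_def)
      with assms obtain b y where x: "x = b # y" and ly: "length y = m - 1"
        by (cases x) auto
      show "x \<in> (\<Union>a \<in> F. face_set a)"
        using ly by (cases b) (auto simp: F_def x sym_of_bool_def)
    qed
  qed
  have mult: "\<forall>D. card {a \<in> F. direction a = D} \<le> 2"
  proof
    fix D
    have "card {a \<in> F. direction a = D} \<le> card F"
      by (rule card_mono[OF fin]) auto
    then show "card {a \<in> F. direction a = D} \<le> 2" using c2 by simp
  qed
  show ?thesis
    using fin c2 faces un mult by (auto simp: good_def k_splitting_def)
qed

definition pre :: "bool \<Rightarrow> bool \<Rightarrow> sym list" where
  "pre c b = (if c then [Star, sym_of_bool b] else [sym_of_bool b, Star])"

lemma step:
  assumes g: "good n k F" and kn: "k \<le> n"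
  shows "\<exists>G. good (n + 2) (k + 1) G"
proof -
  have fin: "finite F" and cF: "card F = 2 ^ k" and fF: "\<forall>a\<in>F. is_face n (n - k) a"
    and uF: "(\<Union>a \<in> F. face_set a) = cube n"
    and mF: "\<And>D. card {a \<in> F. direction a = D} \<le> 2"
    using g by (auto simp: good_def k_splitting_def)
  define c where "c f = (f \<noteq> (SOME g. g \<in> F \<and> direction g = direction f))" for f
  define h where "h p = pre (c (snd p)) (fst p) @ snd p" for p
  define G where "G = h ` (UNIV \<times> F)"
  have inj: "inj_on h (UNIV \<times> F)"
  proof (rule inj_onI)
    fix p q assume "p \<in> UNIV \<times> F" "q \<in> UNIV \<times> F" and e: "h p = h q"
    have "drop 2 (h p) = drop 2 (h q)" using e by simp
    then have s: "snd p = snd q" by (simp add: h_def pre_def)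
    then have "fst p = fst q" using e by (auto simp: h_def pre_def split: if_splits)
    with s show "p = q" by (simp add: prod_eq_iff)
  qed
  have finG: "finite G" using fin by (simp add: G_def)
  have cG: "card G = 2 ^ (k + 1)"
    unfolding G_def using card_image[OF inj] cF by (simp add: card_cartesian_product)
  have dir_h: "direction (h (b, f)) = (if c f then insert 0 (Suc ` Suc ` direction f)
      else insert 1 (Suc ` Suc ` direction f))" for b f
    by (auto simp: h_def pre_def)
  have fG: "\<forall>a\<in>G. is_face (n + 2) (n + 2 - (k + 1)) a"
  proof
    fix a assume "a \<in> G"
    then obtain b f where a: "a = h (b, f)" and f: "f \<in> F" by (auto simp: G_def)
    have lf: "length f = n" and cf: "card (direction f) = n - k" using fF f by (auto simp: is_face_def)
    have "card (Suc ` Suc ` direction f) = n - k" using cf by (simp add: card_image)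
    moreover have "0 \<notin> Suc ` Suc ` direction f" "1 \<notin> Suc ` Suc ` direction f" by auto
    ultimately have "card (direction a) = n - k + 1" by (simp add: a dir_h)
    moreover have "length a = n + 2" using lf by (simp add: a h_def pre_def)
    ultimately show "is_face (n + 2) (n + 2 - (k + 1)) a" using kn by (simp add: is_face_def)
  qed
  have uG: "(\<Union>a \<in> G. face_set a) = cube (n + 2)"
  proof
    show "(\<Union>a \<in> G. face_set a) \<subseteq> cube (n + 2)"
      using fG by (auto simp: cube_def is_face_def dest: face_set_length)
  next
    show "cube (n + 2) \<subseteq> (\<Union>a \<in> G. face_set a)"
    proof
      fix x assume "x \<in> cube (n + 2)"
      then obtain x0 x1 y where x: "x = x0 # x1 # y" and ly: "length y = n"
        by (auto simp: cube_def length_Suc_conv numeral_2_eq_2)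
      then have "y \<in> cube n" by (simp add: cube_def)
      with uF obtain f where f: "f \<in> F" and yf: "y \<in> face_set f" by auto
      show "x \<in> (\<Union>a \<in> G. face_set a)"
      proof (cases "c f")
        case True
        then have "x \<in> face_set (h (x1, f))" using yf by (simp add: x h_def pre_def)
        then show ?thesis using f by (auto simp: G_def)
      next
        case False
        then have "x \<in> face_set (h (x0, f))" using yf by (simp add: x h_def pre_def)
        then show ?thesis using f by (auto simp: G_def)
      qed
    qed
  qed
  have one: "card {f \<in> F. direction f = D' \<and> c f = t} \<le> 1" for D' t
  proof -
    have "\<forall>f1\<in>{f \<in> F. direction f = D' \<and> c f = t}. \<forall>f2\<in>{f \<in> F. direction f = D' \<and> c f = t}. f1 = f2"
    proof (intro ballI)
      fix f1 f2 assume f1: "f1 \<in> {f \<in> F. direction f = D' \<and> c f = t}"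
        and f2: "f2 \<in> {f \<in> F. direction f = D' \<and> c f = t}"
      define s where "s = (SOME g. g \<in> F \<and> direction g = D')"
      have s: "s \<in> F \<and> direction s = D'"
        unfolding s_def by (rule someI[of _ f1]) (use f1 in auto)
      have c1: "c f1 = (f1 \<noteq> s)" using f1 by (simp add: c_def s_def)
      have c2: "c f2 = (f2 \<noteq> s)" using f2 by (simp add: c_def s_def)
      show "f1 = f2"
      proof (rule ccontr)
        assume ne: "f1 \<noteq> f2"
        then have t: "t" using f1 f2 c1 c2 by auto
        then have "f1 \<noteq> s" "f2 \<noteq> s" using f1 f2 c1 c2 by auto
        then have "card {f1, f2, s} = 3" using ne by simp
        moreover have "card {f1, f2, s} \<le> card {a \<in> F. direction a = D'}"
          by (rule card_mono) (use fin f1 f2 s in auto)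
        ultimately show False using mF[of D'] by simp
      qed
    qed
    then show ?thesis using card_le_Suc0_iff_eq[of "{f \<in> F. direction f = D' \<and> c f = t}"] fin by auto
  qed
  have mG: "card {a \<in> G. direction a = D} \<le> 2" for D
  proof -
    define D' where "D' = {i. Suc (Suc i) \<in> D}"
    have sub: "{a \<in> G. direction a = D} \<subseteq> h ` (UNIV \<times> {f \<in> F. direction f = D' \<and> c f = (0 \<in> D)})"
    proof
      fix a assume "a \<in> {a \<in> G. direction a = D}"
      then obtain b f where a: "a = h (b, f)" and f: "f \<in> F" and d: "direction (h (b, f)) = D"
        by (auto simp: G_def)
      have "direction f = D'"
        unfolding D'_def using d[symmetric] by (auto simp: dir_h)
      moreover have "c f = (0 \<in> D)" using d[symmetric] by (auto simp: dir_h)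
      ultimately show "a \<in> h ` (UNIV \<times> {f \<in> F. direction f = D' \<and> c f = (0 \<in> D)})"
        using a f by auto
    qed
    have "card {a \<in> G. direction a = D} \<le> card (h ` (UNIV \<times> {f \<in> F. direction f = D' \<and> c f = (0 \<in> D)}))"
      by (rule card_mono[OF _ sub]) (use fin in auto)
    also have "\<dots> \<le> card ((UNIV::bool set) \<times> {f \<in> F. direction f = D' \<and> c f = (0 \<in> D)})"
      using fin by (intro card_image_le finite_cartesian_product) auto
    also have "\<dots> = 2 * card {f \<in> F. direction f = D' \<and> c f = (0 \<in> D)}"
      by (simp add: card_cartesian_product)
    also have "\<dots> \<le> 2" using one by simp
    finally show ?thesis .
  qed
  show ?thesis
    using finG cG fG uG mG by (auto simp: good_def k_splitting_def)
qed

definition L43 :: "sym list list" where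
  "L43 = [[Star,Zero,Zero,Zero], [Star,Zero,Zero,One], [Zero,Star,One,Zero], [Zero,Star,One,One],
          [Zero,One,Zero,Star], [One,Zero,One,Star], [One,One,Star,Zero], [One,One,Star,One]]"

lemma base43: "good 4 3 (set L43)"
proof -
  have c: "card (set L43) = 2 ^ 3" by (simp add: L43_def)
  have f: "\<forall>a\<in>set L43. is_face 4 (4 - 3) a" by (simp add: L43_def is_face_def)
  have u: "(\<Union>a \<in> set L43. face_set a) = cube 4"
  proof
    show "(\<Union>a \<in> set L43. face_set a) \<subseteq> cube 4"
      by (auto simp: L43_def cube_def dest: face_set_length)
  next
    show "cube 4 \<subseteq> (\<Union>a \<in> set L43. face_set a)"
    proof
      fix x assume "x \<in> cube 4"
      then obtain x0 x1 x2 x3 where x: "x = [x0, x1, x2, x3]"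
        by (auto simp: cube_def length_Suc_conv numeral_eq_Suc)
      show "x \<in> (\<Union>a \<in> set L43. face_set a)"
        unfolding x L43_def
        by (cases x0; cases x1; cases x2; cases x3) (simp_all add: sym_of_bool_def)
    qed
  qed
  have m: "card {a \<in> set L43. direction a = D} \<le> 2" for D
  proof -
    have "card {a \<in> set L43. direction a = D} = card (set (filter (\<lambda>a. direction a = D) L43))"
      by (simp add: set_filter)
    also have "\<dots> \<le> length (filter (\<lambda>a. direction a = D) L43)" by (rule card_length)
    also have "\<dots> = length (filter (\<lambda>d. d = D) (map direction L43))"
      by (simp add: filter_map length_filter_map comp_def)
    also have "map direction L43 = [{0},{0},{1},{1},{3},{3},{2},{2}]"
      by (simp add: L43_def)
    also have "length (filter (\<lambda>d. d = D) [{0},{0},{1},{1},{3},{3},{2},{2}]) \<le> (2::nat)"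
      by (cases "D = {0}"; cases "D = {1}"; cases "D = {2}"; cases "D = {3}") auto
    finally show ?thesis .
  qed
  show ?thesis using c f u m by (simp add: good_def k_splitting_def)
qed

lemma iter:
  assumes "good m j F" "j \<le> m"
  shows "\<exists>G. good (m + 2 * i) (j + i) G"
proof (induction i)
  case 0
  then show ?case using assms by auto
next
  case (Suc i)
  then obtain G where "good (m + 2 * i) (j + i) G" by auto
  from step[OF this] assms(2) obtain G' where "good (m + 2 * i + 2) (j + i + 1) G'" by auto
  then show ?case by (auto simp: algebra_simps)
qed

theorem proposition6:
  fixes n k :: nat
  assumes "0 < k" and "k < n" and "2 * k \<le> n + 2"
  shows "\<exists>F. k_splitting n k F \<and>
           (\<forall>D. card {a \<in> F. direction a = D} \<le> 2)"
proof -
  have "\<exists>F. good n k F"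
  proof (cases "2 * k \<le> n + 1")
    case True
    define m where "m = n + 2 - 2 * k"
    have m1: "1 \<le> m" using True assms by (simp add: m_def)
    obtain F where "good m 1 F" using base1[OF m1] by auto
    from iter[OF this m1, of "k - 1"] have "\<exists>G. good (m + 2 * (k - 1)) (1 + (k - 1)) G" .
    moreover have "m + 2 * (k - 1) = n" "1 + (k - 1) = k" using assms True by (auto simp: m_def)
    ultimately show ?thesis by simp
  next
    case False
    then have k3: "3 \<le> k" and n: "n = 2 * k - 2" using assms by auto
    from iter[OF base43, of "k - 3"] have "\<exists>G. good (4 + 2 * (k - 3)) (3 + (k - 3)) G" by simp
    moreover have "4 + 2 * (k - 3) = n" "3 + (k - 3) = k" using k3 n by auto
    ultimately show ?thesis by simp
  qed
  then show ?thesis by (auto simp: good_def)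
qed

end
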